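(* Consider the heterogeneous subgradient algorithm as in the setting below. Suppose $\{\mathbb G(t)\}$ is uniformly strongly connected by sub-sequences of length $L$ and $\|g_i(t)\|\le G$ for all $i,t$, for some $G>0$. Let $\eta,\mu$ be constants as described below. Then for all $t\ge0$ and $i\in\mathcal V$, $$\Big\|z_i(t+1)-\frac1n\sum_{k=1}^nx_k(t)\Big\|\le\frac8\eta\mu^t\sum_{k=1}^n\|x_k(0)\|+\frac{8nG}{\eta\mu}\sum_{s=0}^t\mu^{t-s}\alpha(s).$$ If in addition $\{\alpha(t)\}$ is positive, non-increasing, with $\sum_t\alpha(t)=\infty$ and $\sum_t\alpha^2(t)<\infty$, then for all $t\ge0$ and $i\in\mathcal V$, $$\Big\|z_i(t+1)-\frac1n\sum_{k=1}^nx_k(t)\Big\|\le\frac8\eta\mu^t\sum_{k=1}^n\|x_k(0)\|+\frac{8nG}{\eta\mu(1-\mu)}\big(\alpha(0)\mu^{t/2}+\alpha(\lceil t/2\rceil)\big).$$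
   Context: Setting. Fix $n$ agents, $\mathcal V=\{1,\dots,n\}$. For each $t\in\{0,1,2,\dots\}$, $\mathbb G(t)=(\mathcal V,\mathcal E(t))$ is a directed graph containing a self-arc $(i,i)$ at every vertex; $\mathcal N_i(t)=\{j:(j,i)\in\mathcal E(t)\}$ and $\mathcal N_i^-(t)=\{k:(i,k)\in\mathcal E(t)\}$. Weights $w_{ij}(t)$ are positive for $j\in\mathcal N_i(t)$ and $w_{ij}(t)=0$ otherwise, and satisfy: there is $\beta>0$ with $w_{ij}(t)\ge\beta$ whenever $j\in\mathcal N_i(t)$, and $\sum_{j\in\mathcal N_i^-(t)}w_{ji}(t)=1$ for all $i,t$. Write $\Phi_W(t,\tau)=W(t-1)\cdots W(\tau)$ for $t>\tau$, where $W(t)=[w_{ij}(t)]$. Uniformly strongly connected by sub-sequences of length $L$: for every $t\ge0$ the graph with vertex set $\mathcal V$ and edge set $\bigcup_{k=t}^{t+L-1}\mathcal E(k)$ is strongly connected. Heterogeneous subgradient algorithm: each agent $i$ has a convex $f_i:\mathbb R^d\to\mathbb R$ and an arbitrary switching signal $\sigma_i(t)\in\{0,1\}$. With stepsizes $\alpha(t)>0$: $x_i(t+1)=\sum_{j\in\mathcal N_i(t)}w_{ij}(t)[x_j(t)-\alpha(t)g_j(t)\sigma_j(t)]-\alpha(t)g_i(t)(1-\sigma_i(t))$, $x_i(0)\in\mathbb R^d$; $y_i(t+1)=\sum_{j\in\mathcal N_i(t)}w_{ij}(t)y_j(t)$, $y_i(0)=1$; $z_i(t)=x_i(t)/y_i(t)$;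 $g_i(t)$ is a subgradient of $f_i$ at $z_i(t)$. (All $\sigma_i\equiv1$ gives subgradient-push; all $\sigma_i\equiv0$ gives push-subgradient.) Constants: $\eta>0$ is any constant with $y_i(t)\ge\eta$ for all $i,t$ (e.g. $\eta=n^{-nL}$); $\mu\in(0,1)$ is any constant for which there exist stochastic vectors $\phi(t)\in\mathbb R^n$ with $|[\Phi_W(t+1,s)]_{ij}-\phi_i(t)|\le4\mu^{t-s}$ for all $i,j\in\mathcal V$, $t\ge s\ge0$ (e.g. $\mu=(1-n^{-nL})^{1/L}$). *)

theory Defs
  imports "HOL-Analysis.Analysis"
begin

definition in_nbrs :: "('v \<times> 'v) set \<Rightarrow> 'v \<Rightarrow> 'v set" where
  "in_nbrs E i = {j. (j, i) \<in> E}"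

definition out_nbrs :: "('v \<times> 'v) set \<Rightarrow> 'v \<Rightarrow> 'v set" where
  "out_nbrs E i = {k. (i, k) \<in> E}"

definition strongly_connected_graph :: "('v \<times> 'v) set \<Rightarrow> bool" where
  "strongly_connected_graph E \<longleftrightarrow> (\<forall>i j. (i, j) \<in> E\<^sup>*)"

definition USC :: "(nat \<Rightarrow> ('v \<times> 'v) set) \<Rightarrow> nat \<Rightarrow> bool" where
  "USC E L \<longleftrightarrow> (\<forall>t. strongly_connected_graph (\<Union>k\<in>{t..<t+L}. E k))"

definition mat_mul :: "('v::finite \<Rightarrow> 'v \<Rightarrow> real) \<Rightarrow> ('v \<Rightarrow> 'v \<Rightarrow> real) \<Rightarrow> 'v \<Rightarrow> 'v \<Rightarrow> real" where
  "mat_mul A B i j = (\<Sum>k\<in>UNIV. A i k * B k j)"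

fun prodW :: "(nat \<Rightarrow> 'v::finite \<Rightarrow> 'v \<Rightarrow> real) \<Rightarrow> nat \<Rightarrow> nat \<Rightarrow> 'v \<Rightarrow> 'v \<Rightarrow> real" where
  "prodW W tau 0 = (\<lambda>i j. if i = j then 1 else 0)"
| "prodW W tau (Suc k) = mat_mul (W (tau + k)) (prodW W tau k)"

text \<open>Phi_W(t, tau) = W(t-1) ... W(tau), for t > tau.\<close>
definition PhiW :: "(nat \<Rightarrow> 'v::finite \<Rightarrow> 'v \<Rightarrow> real) \<Rightarrow> nat \<Rightarrow> nat \<Rightarrow> 'v \<Rightarrow> 'v \<Rightarrow> real" where
  "PhiW W t tau = prodW W tau (t - tau)"

definition stochastic_vec :: "('v::finite \<Rightarrow> real) \<Rightarrow> bool" where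
  "stochastic_vec p \<longleftrightarrow> (\<forall>i. p i \<ge> 0) \<and> (\<Sum>i\<in>UNIV. p i) = 1"

definition is_subgradient :: "('a::real_inner \<Rightarrow> real) \<Rightarrow> 'a \<Rightarrow> 'a \<Rightarrow> bool" where
  "is_subgradient f z g \<longleftrightarrow> (\<forall>u. f u \<ge> f z + inner g (u - z))"

end

theory Submission
  imports Defs
begin

lemma geo_bound:
  fixes \<mu> :: real assumes "0 \<le> \<mu>" "\<mu> < 1"
  shows "(\<Sum>s\<le>b. \<mu> ^ (b - s)) \<le> 1 / (1 - \<mu>)"
proof (induction b)
  case 0 then show ?case using assms by (simp add: field_simps)
next
  case (Suc b)
  have "(\<Sum>s\<le>Suc b. \<mu> ^ (Suc b - s)) = \<mu> * (\<Sum>s\<le>b. \<mu> ^ (b - s)) + 1"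
    by (simp add: sum_distrib_left Suc_diff_le power_Suc)
  also have "\<dots> \<le> \<mu> * (1 / (1 - \<mu>)) + 1"
    using Suc.IH assms by (intro add_right_mono mult_left_mono) auto
  also have "\<dots> = 1 / (1 - \<mu>)" using assms by (simp add: field_simps)
  finally show ?case .
qed

lemma split_bound:
  fixes \<mu> :: real and \<alpha> :: "nat \<Rightarrow> real"
  assumes mu: "0 < \<mu>" "\<mu> < 1" and am: "antimono \<alpha>" and ap: "\<And>t. \<alpha> t > 0"
  shows "(\<Sum>s\<le>t. \<mu> ^ (t - s) * \<alpha> s)
     \<le> (\<alpha> 0 * \<mu> powr (real t / 2) + \<alpha> (nat \<lceil>real t / 2\<rceil>)) / (1 - \<mu>)"
proof -
  define m where "m = nat \<lceil>real t / 2\<rceil>"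
  have m_le: "m \<le> t" unfolding m_def by linarith
  have m2: "real t / 2 \<le> real (t + 1 - m)" unfolding m_def by linarith
  have split: "{..t} = {..<m} \<union> {m..t}" using m_le by auto
  have "(\<Sum>s\<le>t. \<mu> ^ (t - s) * \<alpha> s) = (\<Sum>s<m. \<mu> ^ (t - s) * \<alpha> s) + (\<Sum>s=m..t. \<mu> ^ (t - s) * \<alpha> s)"
    unfolding split by (rule sum.union_disjoint) auto
  moreover have A: "(\<Sum>s<m. \<mu> ^ (t - s) * \<alpha> s) \<le> \<alpha> 0 * \<mu> powr (real t / 2) / (1 - \<mu>)"
  proof (cases "m = 0")
    case True then show ?thesis using mu ap[of 0] by simp
  next
    case False
    have "(\<Sum>s<m. \<mu> ^ (t - s) * \<alpha> s) \<le> (\<Sum>s<m. \<mu> ^ (t + 1 - m) * (\<mu> ^ (m - 1 - s) * \<alpha> 0))"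
    proof (rule sum_mono)
      fix s assume s: "s \<in> {..<m}"
      have "\<mu> ^ (t - s) = \<mu> ^ (t + 1 - m) * \<mu> ^ (m - 1 - s)"
        using s m_le by (simp add: power_add[symmetric])
      moreover have "\<alpha> s \<le> \<alpha> 0" using am by (simp add: antimono_def)
      ultimately show "\<mu> ^ (t - s) * \<alpha> s \<le> \<mu> ^ (t + 1 - m) * (\<mu> ^ (m - 1 - s) * \<alpha> 0)"
        using mu by (simp add: mult_left_mono)
    qed
    also have "\<dots> = \<mu> ^ (t + 1 - m) * \<alpha> 0 * (\<Sum>s\<le>m - 1. \<mu> ^ (m - 1 - s))"
      using False by (simp add: sum_distrib_left sum_distrib_right mult_ac lessThan_Suc_atMost[symmetric])
    also have "\<dots> \<le> \<mu> ^ (t + 1 - m) * \<alpha> 0 * (1 / (1 - \<mu>))"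
      using geo_bound[of \<mu> "m - 1"] mu ap[of 0] by (intro mult_left_mono) auto
    also have "\<mu> ^ (t + 1 - m) \<le> \<mu> powr (real t / 2)"
      using powr_mono'[OF m2, of \<mu>] mu by (simp add: powr_realpow)
    then have "\<mu> ^ (t + 1 - m) * \<alpha> 0 * (1 / (1 - \<mu>)) \<le> \<alpha> 0 * \<mu> powr (real t / 2) / (1 - \<mu>)"
      using mu ap[of 0] by (simp add: divide_right_mono mult.commute)
    finally show ?thesis .
  qed
  moreover have B: "(\<Sum>s=m..t. \<mu> ^ (t - s) * \<alpha> s) \<le> \<alpha> m / (1 - \<mu>)"
  proof -
    have "(\<Sum>s=m..t. \<mu> ^ (t - s) * \<alpha> s) \<le> (\<Sum>s=m..t. \<mu> ^ (t - s) * \<alpha> m)"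
      by (rule sum_mono) (use am mu in \<open>auto simp: antimono_def intro!: mult_left_mono\<close>)
    also have "\<dots> \<le> (\<Sum>s\<le>t. \<mu> ^ (t - s)) * \<alpha> m"
      unfolding sum_distrib_right[symmetric]
      by (intro mult_right_mono sum_mono2) (use ap mu in \<open>auto intro: less_imp_le\<close>)
    also have "\<dots> \<le> 1 / (1 - \<mu>) * \<alpha> m"
      using geo_bound[of \<mu> t] mu ap[of m] by (intro mult_right_mono) auto
    finally show ?thesis by simp
  qed
  ultimately show ?thesis unfolding m_def by (simp add: add_divide_distrib)
qed


lemma delta_scaleR [simp]:
  "(\<Sum>j\<in>UNIV. (if i = j then 1 else 0) *\<^sub>R (a j :: 'b::real_vector)) = a (i::'v::finite)"
proof -
  have "\<And>j. (if i = j then 1 else 0) *\<^sub>R a j = (if i = j then a j else 0)" by simp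
  then show ?thesis by simp
qed

lemma lin4: "(p - c) *\<^sub>R a + (q - c) *\<^sub>R b = (p *\<^sub>R a + q *\<^sub>R b) - (c *\<^sub>R a + c *\<^sub>R (b::'b::real_vector))"
  by (simp add: algebra_simps)

lemma ab5: "(a::'b::ab_group_add) - b - c - (d - e) = (a - d) - (b - e) - c"
  by (simp add: algebra_simps)

lemma sum_lin_swap:
  "(\<Sum>l\<in>UNIV. c l *\<^sub>R (\<Sum>j\<in>UNIV. M l j *\<^sub>R a j))
   = (\<Sum>j\<in>UNIV. (\<Sum>l\<in>UNIV. c l * M l j) *\<^sub>R (a j :: 'b::real_vector))"
  for c :: "'v::finite \<Rightarrow> real"
  unfolding scaleR_sum_right scaleR_sum_left scaleR_scaleR by (rule sum.swap)

lemma sum_lin_swap2: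
  "(\<Sum>l\<in>UNIV. c l *\<^sub>R (\<Sum>s\<in>S. a s *\<^sub>R F s l))
   = (\<Sum>s\<in>S. a s *\<^sub>R (\<Sum>l\<in>UNIV. c l *\<^sub>R (F s l :: 'b::real_vector)))"
  for c :: "'v::finite \<Rightarrow> real"
  unfolding scaleR_sum_right scaleR_scaleR by (subst sum.swap) (simp add: mult.commute)

theorem mainTheorem13:
  fixes E :: "nat \<Rightarrow> ('v::finite \<times> 'v) set"
    and w :: "nat \<Rightarrow> 'v \<Rightarrow> 'v \<Rightarrow> real"
    and \<beta> :: real and L :: nat
    and f :: "'v \<Rightarrow> 'a::euclidean_space \<Rightarrow> real"
    and \<sigma> :: "nat \<Rightarrow> 'v \<Rightarrow> real"
    and \<alpha> :: "nat \<Rightarrow> real"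
    and x z g :: "nat \<Rightarrow> 'v \<Rightarrow> 'a"
    and y :: "nat \<Rightarrow> 'v \<Rightarrow> real"
    and G \<eta> \<mu> :: real
  assumes self_arcs: "\<And>t i. (i, i) \<in> E t"
    and w_pos: "\<And>t i j. j \<in> in_nbrs (E t) i \<Longrightarrow> w t i j > 0"
    and w_zero: "\<And>t i j. j \<notin> in_nbrs (E t) i \<Longrightarrow> w t i j = 0"
    and beta_pos: "\<beta> > 0"
    and w_ge_beta: "\<And>t i j. j \<in> in_nbrs (E t) i \<Longrightarrow> w t i j \<ge> \<beta>"
    and col_stoch: "\<And>t i. (\<Sum>j\<in>out_nbrs (E t) i. w t j i) = 1"
    and usc: "USC E L"
    and convex_f: "\<And>i. convex_on UNIV (f i)"
    and sigma_01: "\<And>t i. \<sigma> t i \<in> {0, 1}"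
    and alpha_pos: "\<And>t. \<alpha> t > 0"
    and x_step: "\<And>t i. x (Suc t) i =
         (\<Sum>j\<in>in_nbrs (E t) i. w t i j *\<^sub>R (x t j - (\<alpha> t * \<sigma> t j) *\<^sub>R g t j))
         - (\<alpha> t * (1 - \<sigma> t i)) *\<^sub>R g t i"
    and y_0: "\<And>i. y 0 i = 1"
    and y_step: "\<And>t i. y (Suc t) i = (\<Sum>j\<in>in_nbrs (E t) i. w t i j * y t j)"
    and z_def: "\<And>t i. z t i = (1 / y t i) *\<^sub>R x t i"
    and g_subgrad: "\<And>t i. is_subgradient (f i) (z t i) (g t i)"
    and G_pos: "G > 0"
    and g_bound: "\<And>t i. norm (g t i) \<le> G"
    and eta_pos: "\<eta> > 0"
    and y_ge_eta: "\<And>t i. y t i \<ge> \<eta>"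
    and mu_range: "0 < \<mu>" "\<mu> < 1"
    and mu_prop: "\<exists>\<phi> :: nat \<Rightarrow> 'v \<Rightarrow> real. (\<forall>t. stochastic_vec (\<phi> t)) \<and>
         (\<forall>i j t s. s \<le> t \<longrightarrow>
            \<bar>PhiW (\<lambda>k a b. w k a b) (t + 1) s i j - \<phi> t i\<bar> \<le> 4 * \<mu> ^ (t - s))"
  shows "(\<forall>t i. norm (z (Suc t) i - (1 / real CARD('v)) *\<^sub>R (\<Sum>k\<in>UNIV. x t k))
            \<le> 8 / \<eta> * \<mu> ^ t * (\<Sum>k\<in>UNIV. norm (x 0 k))
              + 8 * real CARD('v) * G / (\<eta> * \<mu>) * (\<Sum>s\<le>t. \<mu> ^ (t - s) * \<alpha> s))
       \<and> ((antimono \<alpha> \<and> \<not> summable \<alpha> \<and> summable (\<lambda>t. (\<alpha> t)\<^sup>2)) \<longrightarrow>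
          (\<forall>t i. norm (z (Suc t) i - (1 / real CARD('v)) *\<^sub>R (\<Sum>k\<in>UNIV. x t k))
            \<le> 8 / \<eta> * \<mu> ^ t * (\<Sum>k\<in>UNIV. norm (x 0 k))
              + 8 * real CARD('v) * G / (\<eta> * \<mu> * (1 - \<mu>))
                * (\<alpha> 0 * \<mu> powr (real t / 2) + \<alpha> (nat \<lceil>real t / 2\<rceil>))))"

proof -
  define n where "n = real CARD('v)"
  have npos: "n > 0" unfolding n_def by simp
  define P where "P t s = prodW w s (t - s)" for t s
  define u where "u t j = \<sigma> t j *\<^sub>R g t j" for t j
  define v where "v t j = (1 - \<sigma> t j) *\<^sub>R g t j" for t j
  have w0: "w t i j = 0" if "j \<notin> in_nbrs (E t) i" for t i j using w_zero that .
  have wnn: "w t i j \<ge> 0" for t i j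
    using w_pos[of j t i] w_zero[of j t i] by (cases "j \<in> in_nbrs (E t) i") auto
  have conv: "(\<Sum>j\<in>in_nbrs (E t) i. w t i j *\<^sub>R F j) = (\<Sum>j\<in>UNIV. w t i j *\<^sub>R F j)"
    for t i and F :: "'v \<Rightarrow> 'a"
    by (rule sum.mono_neutral_left) (auto simp: w0)
  have convr: "(\<Sum>j\<in>in_nbrs (E t) i. w t i j * F j) = (\<Sum>j\<in>UNIV. w t i j * F j)"
    for t i and F :: "'v \<Rightarrow> real"
    by (rule sum.mono_neutral_left) (auto simp: w0)
  have colsum: "(\<Sum>i\<in>UNIV. w t i j) = 1" for t j
  proof -
    have "(\<Sum>i\<in>UNIV. w t i j) = (\<Sum>i\<in>out_nbrs (E t) j. w t i j)"
      by (rule sum.mono_neutral_right) (auto simp: out_nbrs_def in_nbrs_def w0)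
    then show ?thesis using col_stoch by simp
  qed
  have wle1: "w t i j \<le> 1" for t i j
  proof -
    have "w t i j \<le> (\<Sum>i\<in>UNIV. w t i j)"
      by (rule member_le_sum) (auto simp: wnn)
    then show ?thesis using colsum by simp
  qed
  have xs: "x (Suc t) i = (\<Sum>j\<in>UNIV. w t i j *\<^sub>R x t j)
      - \<alpha> t *\<^sub>R ((\<Sum>j\<in>UNIV. w t i j *\<^sub>R u t j) + v t i)" for t i
    using x_step[of t i] unfolding conv
    by (simp add: u_def v_def scaleR_diff_right sum_subtractf scaleR_sum_right algebra_simps)
  have ys: "y (Suc t) i = (\<Sum>j\<in>UNIV. w t i j * y t j)" for t i
    using y_step[of t i] unfolding convr .
  have Pstep: "(\<Sum>l\<in>UNIV. w t i l * P t s l j) = P (Suc t) s i j" if "s \<le> t" for t s i j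
    using that by (simp add: P_def Suc_diff_le mat_mul_def)
  have Pid: "P t t i j = (if i = j then 1 else 0)" for t i j by (simp add: P_def)
  have Pdiag: "P (Suc t) t i j = w t i j" for t i j
  proof -
    have "\<And>l. w t i l * (if l = j then 1 else 0) = (if l = j then w t i l else 0)" by simp
    then show ?thesis using Pstep[of t t i j] by (simp add: Pid)
  qed
  have closed: "x t i = (\<Sum>j\<in>UNIV. P t 0 i j *\<^sub>R x 0 j)
     - (\<Sum>s<t. \<alpha> s *\<^sub>R ((\<Sum>j\<in>UNIV. P t s i j *\<^sub>R u s j) + (\<Sum>j\<in>UNIV. P t (Suc s) i j *\<^sub>R v s j)))"
    for t i
  proof (induction t arbitrary: i)
    case 0 show ?case by (simp add: Pid)
  next
    case (Suc t)
    have A: "(\<Sum>l\<in>UNIV. w t i l *\<^sub>R x t l) = (\<Sum>j\<in>UNIV. P (Suc t) 0 i j *\<^sub>R x 0 j)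
       - (\<Sum>s<t. \<alpha> s *\<^sub>R ((\<Sum>j\<in>UNIV. P (Suc t) s i j *\<^sub>R u s j) + (\<Sum>j\<in>UNIV. P (Suc t) (Suc s) i j *\<^sub>R v s j)))"
    proof -
      have "(\<Sum>l\<in>UNIV. w t i l *\<^sub>R x t l) = (\<Sum>l\<in>UNIV. w t i l *\<^sub>R (\<Sum>j\<in>UNIV. P t 0 l j *\<^sub>R x 0 j))
        - (\<Sum>l\<in>UNIV. w t i l *\<^sub>R (\<Sum>s<t. \<alpha> s *\<^sub>R ((\<Sum>j\<in>UNIV. P t s l j *\<^sub>R u s j) + (\<Sum>j\<in>UNIV. P t (Suc s) l j *\<^sub>R v s j))))"
        by (simp only: Suc.IH scaleR_diff_right sum_subtractf)
      also have "(\<Sum>l\<in>UNIV. w t i l *\<^sub>R (\<Sum>j\<in>UNIV. P t 0 l j *\<^sub>R x 0 j)) = (\<Sum>j\<in>UNIV. P (Suc t) 0 i j *\<^sub>R x 0 j)"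
        by (simp add: sum_lin_swap Pstep)
      also have "(\<Sum>l\<in>UNIV. w t i l *\<^sub>R (\<Sum>s<t. \<alpha> s *\<^sub>R ((\<Sum>j\<in>UNIV. P t s l j *\<^sub>R u s j) + (\<Sum>j\<in>UNIV. P t (Suc s) l j *\<^sub>R v s j))))
         = (\<Sum>s<t. \<alpha> s *\<^sub>R (\<Sum>l\<in>UNIV. w t i l *\<^sub>R ((\<Sum>j\<in>UNIV. P t s l j *\<^sub>R u s j) + (\<Sum>j\<in>UNIV. P t (Suc s) l j *\<^sub>R v s j))))"
        by (rule sum_lin_swap2)
      also have "\<dots> = (\<Sum>s<t. \<alpha> s *\<^sub>R ((\<Sum>j\<in>UNIV. P (Suc t) s i j *\<^sub>R u s j) + (\<Sum>j\<in>UNIV. P (Suc t) (Suc s) i j *\<^sub>R v s j)))"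
        by (rule sum.cong) (auto simp: scaleR_add_right sum.distrib sum_lin_swap Pstep)
      finally show ?thesis .
    qed
    show ?case unfolding xs A by (simp add: Pdiag Pid algebra_simps)
  qed
  have yclosed: "y t i = (\<Sum>j\<in>UNIV. P t 0 i j)" for t i
  proof (induction t arbitrary: i)
    case 0 show ?case by (simp add: Pid y_0)
  next
    case (Suc t)
    show ?case unfolding ys Suc.IH sum_distrib_left
      by (subst sum.swap) (simp add: Pstep)
  qed
  have colX: "(\<Sum>i\<in>UNIV. \<Sum>j\<in>UNIV. w t i j *\<^sub>R X j) = (\<Sum>j\<in>UNIV. X j)" for t and X :: "'v \<Rightarrow> 'a"
    by (subst sum.swap) (simp add: scaleR_sum_left[symmetric] colsum)
  have ug: "u t j + v t j = g t j" for t j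
  proof -
    have "u t j + v t j = (\<sigma> t j + (1 - \<sigma> t j)) *\<^sub>R g t j"
      unfolding u_def v_def scaleR_add_left ..
    then show ?thesis by simp
  qed
  have nuv: "norm (u t j) + norm (v t j) \<le> G" for t j
    using sigma_01[of t j] g_bound[of t j] by (auto simp: u_def v_def)
  have sumx: "(\<Sum>k\<in>UNIV. x t k) = (\<Sum>k\<in>UNIV. x 0 k) - (\<Sum>s<t. \<alpha> s *\<^sub>R (\<Sum>k\<in>UNIV. g s k))" for t
  proof (induction t)
    case 0 show ?case by simp
  next
    case (Suc t)
    have "(\<Sum>i\<in>UNIV. x (Suc t) i) = (\<Sum>j\<in>UNIV. x t j) - \<alpha> t *\<^sub>R ((\<Sum>j\<in>UNIV. u t j) + (\<Sum>j\<in>UNIV. v t j))"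
      by (simp add: xs sum_subtractf sum.distrib scaleR_sum_right[symmetric] colX)
    also have "(\<Sum>j\<in>UNIV. u t j) + (\<Sum>j\<in>UNIV. v t j) = (\<Sum>j\<in>UNIV. g t j)"
      by (simp add: sum.distrib[symmetric] ug)
    finally show ?case using Suc.IH by simp
  qed
  obtain \<phi> :: "nat \<Rightarrow> 'v \<Rightarrow> real" where
    phib0: "\<And>i j t s. s \<le> t \<Longrightarrow> \<bar>PhiW (\<lambda>k a b. w k a b) (t + 1) s i j - \<phi> t i\<bar> \<le> 4 * \<mu> ^ (t - s)"
    using mu_prop by blast
  have phib: "\<bar>P (Suc t) s i j - \<phi> t i\<bar> \<le> 4 * \<mu> ^ (t - s)" if "s \<le> t" for i j t s
    using phib0[OF that, of i j] by (simp add: PhiW_def P_def)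
  have part1: "norm (z (Suc t) i - (1 / real CARD('v)) *\<^sub>R (\<Sum>k\<in>UNIV. x t k))
            \<le> 8 / \<eta> * \<mu> ^ t * (\<Sum>k\<in>UNIV. norm (x 0 k))
              + 8 * real CARD('v) * G / (\<eta> * \<mu>) * (\<Sum>s\<le>t. \<mu> ^ (t - s) * \<alpha> s)" for t i
  proof -
    define Y where "Y = y (Suc t) i"
    define S where "S = (\<Sum>k\<in>UNIV. x t k)"
    define ph where "ph = \<phi> t i"
    have Yeta: "Y \<ge> \<eta>" unfolding Y_def by (rule y_ge_eta)
    have Ypos: "Y > 0" using Yeta eta_pos by linarith
    have Yph: "\<bar>Y / n - ph\<bar> \<le> 4 * \<mu> ^ t"
    proof -
      have "Y / n - ph = (\<Sum>j\<in>UNIV. (P (Suc t) 0 i j - ph)) / n"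
        using npos by (simp add: Y_def yclosed sum_subtractf n_def field_simps)
      also have "\<bar>\<dots>\<bar> \<le> (\<Sum>j\<in>UNIV. \<bar>P (Suc t) 0 i j - ph\<bar>) / n"
        using npos by (simp add: divide_right_mono sum_abs)
      also have "\<dots> \<le> (\<Sum>j::'v\<in>UNIV. 4 * \<mu> ^ t) / n"
        unfolding ph_def
      proof (rule divide_right_mono)
        show "(\<Sum>j\<in>UNIV. \<bar>P (Suc t) 0 i j - \<phi> t i\<bar>) \<le> (\<Sum>j::'v\<in>UNIV. 4 * \<mu> ^ t)"
          by (rule sum_mono) (use phib[of 0 t i] in simp)
      qed (use npos in simp)
      also have "\<dots> = 4 * \<mu> ^ t" using npos by (simp add: n_def)
      finally show ?thesis .
    qed
    have c0: "\<bar>P (Suc t) 0 i j - Y / n\<bar> \<le> 8 * \<mu> ^ t" for j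
    proof -
      have "\<bar>P (Suc t) 0 i j - ph\<bar> \<le> 4 * \<mu> ^ t" using phib[of 0 t i j] unfolding ph_def by simp
      then show ?thesis using Yph by arith
    qed
    have cs: "\<bar>P (Suc t) s i j - Y / n\<bar> \<le> 8 * \<mu> ^ (t - s) / \<mu>"
       "\<bar>P (Suc t) (Suc s) i j - Y / n\<bar> \<le> 8 * \<mu> ^ (t - s) / \<mu>" if st: "s < t" for s j
    proof -
      define q where "q = \<mu> ^ (t - Suc s)"
      have q1: "\<mu> ^ (t - s) = \<mu> * q" unfolding q_def using st
        by (metis Suc_diff_Suc power_Suc)
      have q2: "\<mu> ^ (t - s) / \<mu> = q" using q1 mu_range by simp
      have q2': "8 * \<mu> ^ (t - s) / \<mu> = 8 * q" using q2 by (simp add: times_divide_eq_right[symmetric])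
      have q3: "\<mu> ^ t \<le> \<mu> ^ (t - s)" using mu_range by (intro power_decreasing) auto
      have q4: "\<mu> ^ (t - s) \<le> q" using q1 mu_range q_def by (simp add: mult_left_le_one_le)
      have a1: "\<bar>P (Suc t) s i j - ph\<bar> \<le> 4 * \<mu> ^ (t - s)" using phib[of s t i j] st ph_def by simp
      have a2: "\<bar>P (Suc t) (Suc s) i j - ph\<bar> \<le> 4 * q" using phib[of "Suc s" t i j] st ph_def q_def by simp
      show "\<bar>P (Suc t) s i j - Y / n\<bar> \<le> 8 * \<mu> ^ (t - s) / \<mu>"
        unfolding q2' using a1 Yph q3 q4 by arith
      show "\<bar>P (Suc t) (Suc s) i j - Y / n\<bar> \<le> 8 * \<mu> ^ (t - s) / \<mu>"
        unfolding q2' using a2 Yph q3 q4 by arith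
    qed
    have X_eq: "x (Suc t) i = (\<Sum>j\<in>UNIV. P (Suc t) 0 i j *\<^sub>R x 0 j)
       - (\<Sum>s<t. \<alpha> s *\<^sub>R ((\<Sum>j\<in>UNIV. P (Suc t) s i j *\<^sub>R u s j) + (\<Sum>j\<in>UNIV. P (Suc t) (Suc s) i j *\<^sub>R v s j)))
       - \<alpha> t *\<^sub>R ((\<Sum>j\<in>UNIV. w t i j *\<^sub>R u t j) + v t i)"
    proof -
      have tt: "(\<Sum>j\<in>UNIV. P (Suc t) t i j *\<^sub>R u t j) + (\<Sum>j\<in>UNIV. P (Suc t) (Suc t) i j *\<^sub>R v t j)
          = (\<Sum>j\<in>UNIV. w t i j *\<^sub>R u t j) + v t i"
        by (simp only: Pdiag Pid delta_scaleR)
      show ?thesis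
        by (subst closed[of "Suc t" i]) (simp only: sum.lessThan_Suc tt diff_diff_eq)
    qed
    have S_eq: "(Y / n) *\<^sub>R S = (\<Sum>j\<in>UNIV. (Y / n) *\<^sub>R x 0 j)
       - (\<Sum>s<t. \<alpha> s *\<^sub>R (\<Sum>j\<in>UNIV. (Y / n) *\<^sub>R u s j + (Y / n) *\<^sub>R v s j))"
    proof -
      have e1: "(Y / n) *\<^sub>R (\<Sum>s<t. \<alpha> s *\<^sub>R (\<Sum>k\<in>UNIV. g s k))
          = (\<Sum>s<t. (Y / n) *\<^sub>R (\<alpha> s *\<^sub>R (\<Sum>k\<in>UNIV. g s k)))"
        by (rule scaleR_sum_right)
      also have "\<dots> = (\<Sum>s<t. \<alpha> s *\<^sub>R (\<Sum>j\<in>UNIV. (Y / n) *\<^sub>R u s j + (Y / n) *\<^sub>R v s j))"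
      proof (rule sum.cong)
        fix s
        have "(\<Sum>j\<in>UNIV. (Y / n) *\<^sub>R u s j + (Y / n) *\<^sub>R v s j) = (Y / n) *\<^sub>R (\<Sum>k\<in>UNIV. g s k)"
          by (simp add: scaleR_add_right[symmetric] ug scaleR_sum_right)
        then show "(Y / n) *\<^sub>R (\<alpha> s *\<^sub>R (\<Sum>k\<in>UNIV. g s k))
          = \<alpha> s *\<^sub>R (\<Sum>j\<in>UNIV. (Y / n) *\<^sub>R u s j + (Y / n) *\<^sub>R v s j)"
          by simp
      qed simp
      finally have e2: "(Y / n) *\<^sub>R (\<Sum>s<t. \<alpha> s *\<^sub>R (\<Sum>k\<in>UNIV. g s k))
          = (\<Sum>s<t. \<alpha> s *\<^sub>R (\<Sum>j\<in>UNIV. (Y / n) *\<^sub>R u s j + (Y / n) *\<^sub>R v s j))" .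
      have "(Y / n) *\<^sub>R S = (Y / n) *\<^sub>R (\<Sum>k\<in>UNIV. x 0 k) - (Y / n) *\<^sub>R (\<Sum>s<t. \<alpha> s *\<^sub>R (\<Sum>k\<in>UNIV. g s k))"
        unfolding S_def sumx[of t] by (rule scaleR_diff_right)
      then show ?thesis by (simp only: e2 scaleR_sum_right[of "Y / n" "\<lambda>k. x 0 k" UNIV])
    qed
    define D0 where "D0 = (\<Sum>j\<in>UNIV. (P (Suc t) 0 i j - Y / n) *\<^sub>R x 0 j)"
    define Es where "Es s = (\<Sum>j\<in>UNIV. (P (Suc t) s i j - Y / n) *\<^sub>R u s j
        + (P (Suc t) (Suc s) i j - Y / n) *\<^sub>R v s j)" for s
    define F where "F = (\<Sum>j\<in>UNIV. w t i j *\<^sub>R u t j) + v t i"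
    have Deq: "x (Suc t) i - (Y / n) *\<^sub>R S = D0 - (\<Sum>s<t. \<alpha> s *\<^sub>R Es s) - \<alpha> t *\<^sub>R F"
    proof -
      have 1: "D0 = (\<Sum>j\<in>UNIV. P (Suc t) 0 i j *\<^sub>R x 0 j) - (\<Sum>j\<in>UNIV. (Y / n) *\<^sub>R x 0 j)"
        unfolding D0_def by (simp add: scaleR_diff_left sum_subtractf)
      have 2: "(\<Sum>s<t. \<alpha> s *\<^sub>R Es s) = (\<Sum>s<t. \<alpha> s *\<^sub>R ((\<Sum>j\<in>UNIV. P (Suc t) s i j *\<^sub>R u s j) + (\<Sum>j\<in>UNIV. P (Suc t) (Suc s) i j *\<^sub>R v s j)))
          - (\<Sum>s<t. \<alpha> s *\<^sub>R (\<Sum>j\<in>UNIV. (Y / n) *\<^sub>R u s j + (Y / n) *\<^sub>R v s j))"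
        unfolding sum_subtractf[symmetric] scaleR_diff_right[symmetric]
      proof (rule sum.cong)
        fix s
        have "Es s = (\<Sum>j\<in>UNIV. P (Suc t) s i j *\<^sub>R u s j + P (Suc t) (Suc s) i j *\<^sub>R v s j
             - ((Y / n) *\<^sub>R u s j + (Y / n) *\<^sub>R v s j))"
          unfolding Es_def by (rule sum.cong) (simp_all add: lin4)
        then show "\<alpha> s *\<^sub>R Es s = \<alpha> s *\<^sub>R ((\<Sum>j\<in>UNIV. P (Suc t) s i j *\<^sub>R u s j) + (\<Sum>j\<in>UNIV. P (Suc t) (Suc s) i j *\<^sub>R v s j)
          - (\<Sum>j\<in>UNIV. (Y / n) *\<^sub>R u s j + (Y / n) *\<^sub>R v s j))"
          by (simp only: sum_subtractf sum.distrib)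
      qed simp
      show ?thesis unfolding X_eq S_eq 1 2 F_def by (rule ab5)
    qed
    have nD0: "norm D0 \<le> 8 * \<mu> ^ t * (\<Sum>j\<in>UNIV. norm (x 0 j))"
      unfolding D0_def sum_distrib_left
    proof (rule sum_norm_le)
      fix j
      show "norm ((P (Suc t) 0 i j - Y / n) *\<^sub>R x 0 j) \<le> 8 * \<mu> ^ t * norm (x 0 j)"
        using c0[of j] by (simp add: mult_right_mono)
    qed
    have nE: "norm (Es s) \<le> n * (8 * \<mu> ^ (t - s) / \<mu> * G)" if st: "s < t" for s
    proof -
      have K0: "8 * \<mu> ^ (t - s) / \<mu> \<ge> 0" using mu_range by simp
      have "norm (Es s) \<le> (\<Sum>j::'v\<in>UNIV. 8 * \<mu> ^ (t - s) / \<mu> * G)"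
        unfolding Es_def
      proof (rule sum_norm_le)
        fix j
        have "norm ((P (Suc t) s i j - Y / n) *\<^sub>R u s j + (P (Suc t) (Suc s) i j - Y / n) *\<^sub>R v s j)
            \<le> \<bar>P (Suc t) s i j - Y / n\<bar> * norm (u s j) + \<bar>P (Suc t) (Suc s) i j - Y / n\<bar> * norm (v s j)"
          by (rule order_trans[OF norm_triangle_ineq]) simp
        also have "\<dots> \<le> 8 * \<mu> ^ (t - s) / \<mu> * norm (u s j) + 8 * \<mu> ^ (t - s) / \<mu> * norm (v s j)"
          using cs[OF st, of j] by (intro add_mono mult_right_mono) auto
        also have "\<dots> \<le> 8 * \<mu> ^ (t - s) / \<mu> * G"
          using mult_left_mono[OF nuv[of s j] K0] by (simp only: distrib_left)
        finally show "norm ((P (Suc t) s i j - Y / n) *\<^sub>R u s j + (P (Suc t) (Suc s) i j - Y / n) *\<^sub>R v s j)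
            \<le> 8 * \<mu> ^ (t - s) / \<mu> * G" .
      qed
      also have "\<dots> = n * (8 * \<mu> ^ (t - s) / \<mu> * G)" by (simp add: n_def)
      finally show ?thesis .
    qed
    have n1: "n \<ge> 1" unfolding n_def by simp
    have nF: "norm F \<le> 8 * n * G / \<mu>"
    proof -
      have a: "norm (\<Sum>j\<in>UNIV. w t i j *\<^sub>R u t j) \<le> (\<Sum>j::'v\<in>UNIV. G)"
      proof (rule sum_norm_le)
        fix j
        have "norm (u t j) \<le> G" using nuv[of t j] by (smt (verit) norm_ge_zero)
        then show "norm (w t i j *\<^sub>R u t j) \<le> G"
          using wnn[of t i j] wle1[of t i j] by (simp add: mult_le_one mult_mono' order_trans[OF mult_right_mono[of "w t i j" 1 "norm (u t j)"]])
      qed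
      have b: "norm (v t i) \<le> G" using nuv[of t i] by (smt (verit) norm_ge_zero)
      have "norm F \<le> n * G + G" unfolding F_def
        using order_trans[OF norm_triangle_ineq add_mono[OF a b]] by (simp add: n_def)
      also have "\<dots> \<le> 8 * n * G"
      proof -
        have h: "G \<le> n * G" using mult_right_mono[of 1 n G] n1 G_pos by simp
        have h2: "0 \<le> n * G" using n1 G_pos by simp
        show ?thesis unfolding mult.assoc using h h2 by linarith
      qed
      also have "\<dots> \<le> 8 * n * G / \<mu>"
      proof -
        have "8 * n * G * \<mu> \<le> 8 * n * G" using mu_range n1 G_pos by (intro mult_left_le) auto
        then show ?thesis using mu_range by (simp add: le_divide_eq)
      qed
      finally show ?thesis .
    qed
    have nD: "norm (x (Suc t) i - (Y / n) *\<^sub>R S) \<le> 8 * \<mu> ^ t * (\<Sum>j\<in>UNIV. norm (x 0 j))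
        + (\<Sum>s<t. \<alpha> s * (n * (8 * \<mu> ^ (t - s) / \<mu> * G))) + \<alpha> t * (8 * n * G / \<mu>)"
    proof -
      have t1: "norm (D0 - (\<Sum>s<t. \<alpha> s *\<^sub>R Es s) - \<alpha> t *\<^sub>R F)
          \<le> norm D0 + norm (\<Sum>s<t. \<alpha> s *\<^sub>R Es s) + norm (\<alpha> t *\<^sub>R F)"
        by (smt (verit) norm_triangle_ineq4)
      have t2: "norm (\<Sum>s<t. \<alpha> s *\<^sub>R Es s) \<le> (\<Sum>s<t. \<alpha> s * (n * (8 * \<mu> ^ (t - s) / \<mu> * G)))"
      proof (rule sum_norm_le)
        fix s assume "s \<in> {..<t}"
        then have st: "s < t" by simp
        have "norm (\<alpha> s *\<^sub>R Es s) = \<alpha> s * norm (Es s)" using alpha_pos[of s] by simp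
        also have "\<dots> \<le> \<alpha> s * (n * (8 * \<mu> ^ (t - s) / \<mu> * G))"
          by (rule mult_left_mono[OF nE[OF st] less_imp_le[OF alpha_pos[of s]]])
        finally show "norm (\<alpha> s *\<^sub>R Es s) \<le> \<alpha> s * (n * (8 * \<mu> ^ (t - s) / \<mu> * G))" .
      qed
      have t3: "norm (\<alpha> t *\<^sub>R F) \<le> \<alpha> t * (8 * n * G / \<mu>)"
        using mult_left_mono[OF nF less_imp_le[OF alpha_pos[of t]]] alpha_pos[of t] by simp
      show ?thesis unfolding Deq using t1 t2 t3 nD0 by linarith
    qed
    have sumid: "(\<Sum>s<t. \<alpha> s * (n * (8 * \<mu> ^ (t - s) / \<mu> * G))) + \<alpha> t * (8 * n * G / \<mu>)
        = 8 * n * G / \<mu> * (\<Sum>s\<le>t. \<mu> ^ (t - s) * \<alpha> s)"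
    proof -
      have "(\<Sum>s<t. \<alpha> s * (n * (8 * \<mu> ^ (t - s) / \<mu> * G)))
          = (\<Sum>s<t. 8 * n * G / \<mu> * (\<mu> ^ (t - s) * \<alpha> s))"
        by (rule sum.cong) (simp_all add: field_simps)
      also have "\<dots> = 8 * n * G / \<mu> * (\<Sum>s<t. \<mu> ^ (t - s) * \<alpha> s)"
        by (rule sum_distrib_left[symmetric])
      finally have e: "(\<Sum>s<t. \<alpha> s * (n * (8 * \<mu> ^ (t - s) / \<mu> * G)))
          = 8 * n * G / \<mu> * (\<Sum>s<t. \<mu> ^ (t - s) * \<alpha> s)" .
      have "(\<Sum>s\<le>t. \<mu> ^ (t - s) * \<alpha> s) = (\<Sum>s<t. \<mu> ^ (t - s) * \<alpha> s) + \<alpha> t"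
        by (simp add: lessThan_Suc_atMost[symmetric])
      then show ?thesis unfolding e by (simp add: distrib_left)
    qed
    have zeq: "z (Suc t) i - (1 / real CARD('v)) *\<^sub>R S = (1 / Y) *\<^sub>R (x (Suc t) i - (Y / n) *\<^sub>R S)"
      using Ypos by (simp add: z_def Y_def[symmetric] scaleR_diff_right n_def)
    have "norm (z (Suc t) i - (1 / real CARD('v)) *\<^sub>R S) = norm (x (Suc t) i - (Y / n) *\<^sub>R S) / Y"
      unfolding zeq using Ypos by simp
    also have "\<dots> \<le> norm (x (Suc t) i - (Y / n) *\<^sub>R S) / \<eta>"
      using Yeta eta_pos by (intro divide_left_mono) auto
    also have "\<dots> \<le> (8 * \<mu> ^ t * (\<Sum>j\<in>UNIV. norm (x 0 j))
        + (\<Sum>s<t. \<alpha> s * (n * (8 * \<mu> ^ (t - s) / \<mu> * G))) + \<alpha> t * (8 * n * G / \<mu>)) / \<eta>"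
      using nD eta_pos by (intro divide_right_mono) auto
    also have "\<dots> = 8 / \<eta> * \<mu> ^ t * (\<Sum>k\<in>UNIV. norm (x 0 k))
              + 8 * real CARD('v) * G / (\<eta> * \<mu>) * (\<Sum>s\<le>t. \<mu> ^ (t - s) * \<alpha> s)"
      unfolding add.assoc sumid using eta_pos mu_range by (simp add: n_def field_simps)
    finally show ?thesis unfolding S_def .
  qed
  show ?thesis
  proof (intro conjI impI allI)
    fix t i show "norm (z (Suc t) i - (1 / real CARD('v)) *\<^sub>R (\<Sum>k\<in>UNIV. x t k))
            \<le> 8 / \<eta> * \<mu> ^ t * (\<Sum>k\<in>UNIV. norm (x 0 k))
              + 8 * real CARD('v) * G / (\<eta> * \<mu>) * (\<Sum>s\<le>t. \<mu> ^ (t - s) * \<alpha> s)"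
      by (rule part1)
  next
    fix t i assume H: "antimono \<alpha> \<and> \<not> summable \<alpha> \<and> summable (\<lambda>t. (\<alpha> t)\<^sup>2)"
    have sb: "(\<Sum>s\<le>t. \<mu> ^ (t - s) * \<alpha> s)
       \<le> (\<alpha> 0 * \<mu> powr (real t / 2) + \<alpha> (nat \<lceil>real t / 2\<rceil>)) / (1 - \<mu>)"
      using H alpha_pos by (intro split_bound[OF mu_range(1) mu_range(2)]) auto
    have cpos: "8 * real CARD('v) * G / (\<eta> * \<mu>) \<ge> 0" using G_pos eta_pos mu_range by simp
    have "8 * real CARD('v) * G / (\<eta> * \<mu>) * (\<Sum>s\<le>t. \<mu> ^ (t - s) * \<alpha> s)
        \<le> 8 * real CARD('v) * G / (\<eta> * \<mu>) * ((\<alpha> 0 * \<mu> powr (real t / 2) + \<alpha> (nat \<lceil>real t / 2\<rceil>)) / (1 - \<mu>))"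
      using sb cpos by (rule mult_left_mono)
    also have "\<dots> = 8 * real CARD('v) * G / (\<eta> * \<mu> * (1 - \<mu>))
                * (\<alpha> 0 * \<mu> powr (real t / 2) + \<alpha> (nat \<lceil>real t / 2\<rceil>))"
      by simp
    finally show "norm (z (Suc t) i - (1 / real CARD('v)) *\<^sub>R (\<Sum>k\<in>UNIV. x t k))
            \<le> 8 / \<eta> * \<mu> ^ t * (\<Sum>k\<in>UNIV. norm (x 0 k))
              + 8 * real CARD('v) * G / (\<eta> * \<mu> * (1 - \<mu>))
                * (\<alpha> 0 * \<mu> powr (real t / 2) + \<alpha> (nat \<lceil>real t / 2\<rceil>))"
      using part1[of t i] by linarith
  qed
qed

end
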